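(* Let $n\ge2$, $A\in\mathbb{R}^{n\times n}$ symmetric positive definite with largest and smallest eigenvalues $\lambda_1,\lambda_n$, $\rho=\lambda_1-\lambda_n$, and $f(\mathbf{z})=\frac12\mathbf{z}^TA\mathbf{z}+\frac{\beta}{2}\sum_kz_k^4$ with $\beta>\frac{18n^3}{n-1}\rho$. Then every local minimizer $\mathbf{y}$ of $f$ on $\mathbb{S}^{n-1}$ satisfies $f(\mathbf{y})-\min_{\mathbf{z}\in\mathbb{S}^{n-1}}f(\mathbf{z})\le\frac{1}{18n}\min_{\mathbf{z}\in\mathbb{S}^{n-1}}f(\mathbf{z})$.
   Context: $\mathbb{S}^{n-1}$ is the unit sphere in $\mathbb{R}^n$. *)

theory Defs
  imports "HOL-Analysis.Analysis"
begin

definition sym_posdef :: "real^'n^'n \<Rightarrow> bool" where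
  "sym_posdef A \<longleftrightarrow> transpose A = A \<and> (\<forall>x. x \<noteq> 0 \<longrightarrow> x \<bullet> (A *v x) > 0)"

definition eigenvalues_of :: "real^'n^'n \<Rightarrow> real set" where
  "eigenvalues_of A = {c. \<exists>v. v \<noteq> 0 \<and> A *v v = c *\<^sub>R v}"

definition lambda_max :: "real^'n^'n \<Rightarrow> real" where
  "lambda_max A = Max (eigenvalues_of A)"

definition lambda_min :: "real^'n^'n \<Rightarrow> real" where
  "lambda_min A = Min (eigenvalues_of A)"

definition quartic_obj :: "real^'n^'n \<Rightarrow> real \<Rightarrow> real^'n \<Rightarrow> real" where
  "quartic_obj A \<beta> z = (1/2) * (z \<bullet> (A *v z)) + (\<beta>/2) * (\<Sum>k\<in>UNIV. (z $ k) ^ 4)"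

definition local_min_on :: "('a::metric_space \<Rightarrow> real) \<Rightarrow> 'a set \<Rightarrow> 'a \<Rightarrow> bool" where
  "local_min_on f S y \<longleftrightarrow> y \<in> S \<and> (\<exists>\<epsilon>>0. \<forall>z\<in>S. dist z y < \<epsilon> \<longrightarrow> f y \<le> f z)"

end

theory Submission imports Defs begin
lemma left_neg: "eventually (\<lambda>t::real. t < 0) (at_left 0)"
  by (simp add: eventually_at_filter)

lemma poly_loc_min:
  fixes c1 c2 c3 c4 :: real
  assumes ev: "eventually (\<lambda>t. 0 \<le> c1*t + c2*t^2 + c3*t^3 + c4*t^4) (at 0)"
  shows "c1 = 0 \<and> 0 \<le> c2"
proof -
  from ev have evr: "eventually (\<lambda>t. 0 \<le> c1*t + c2*t^2 + c3*t^3 + c4*t^4) (at_right 0)"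
    and evl: "eventually (\<lambda>t. 0 \<le> c1*t + c2*t^2 + c3*t^3 + c4*t^4) (at_left 0)"
    using eventually_at_split by auto
  have lim1: "((\<lambda>t. c1 + c2*t + c3*t^2 + c4*t^3) \<longlongrightarrow> c1) (at (0::real) within S)" for S
    by (rule tendsto_eq_intros refl tendsto_ident_at)+ simp
  have lim2: "((\<lambda>t. c2 + c3*t + c4*t^2) \<longlongrightarrow> c2) (at (0::real) within S)" for S
    by (rule tendsto_eq_intros refl tendsto_ident_at)+ simp
  have r1: "eventually (\<lambda>t. 0 \<le> c1 + c2*t + c3*t^2 + c4*t^3) (at_right 0)"
    using evr eventually_at_right_less
  proof eventually_elim
    case (elim t)
    have "c1*t + c2*t^2 + c3*t^3 + c4*t^4 = t * (c1 + c2*t + c3*t^2 + c4*t^3)"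
      by (simp add: algebra_simps power2_eq_square power3_eq_cube power4_eq_xxxx)
    with elim show ?case by (simp add: zero_le_mult_iff)
  qed
  have l1: "eventually (\<lambda>t. c1 + c2*t + c3*t^2 + c4*t^3 \<le> 0) (at_left 0)"
    using evl left_neg
  proof eventually_elim
    case (elim t)
    have "c1*t + c2*t^2 + c3*t^3 + c4*t^4 = t * (c1 + c2*t + c3*t^2 + c4*t^3)"
      by (simp add: algebra_simps power2_eq_square power3_eq_cube power4_eq_xxxx)
    with elim show ?case by (simp add: zero_le_mult_iff)
  qed
  have "0 \<le> c1" by (rule tendsto_lowerbound[OF lim1 r1 trivial_limit_at_right_real])
  moreover have "c1 \<le> 0" by (rule tendsto_upperbound[OF lim1 l1 trivial_limit_at_left_real])
  ultimately have c1: "c1 = 0" by simp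
  have r2: "eventually (\<lambda>t. 0 \<le> c2 + c3*t + c4*t^2) (at_right 0)"
    using evr eventually_at_right_less
  proof eventually_elim
    case (elim t)
    have "c1*t + c2*t^2 + c3*t^3 + c4*t^4 = t^2 * (c2 + c3*t + c4*t^2)"
      using c1 by (simp add: algebra_simps power2_eq_square power3_eq_cube power4_eq_xxxx)
    with elim show ?case by (simp add: zero_le_mult_iff)
  qed
  have "0 \<le> c2" by (rule tendsto_lowerbound[OF lim2 r2 trivial_limit_at_right_real])
  with c1 show ?thesis by simp
qed

lemma disc:
  fixes a b c :: real
  assumes "\<And>t. 0 \<le> a + 2*b*t + c*t^2" "0 \<le> c"
  shows "b^2 \<le> a*c"
proof (cases "c = 0")
  case True
  show ?thesis
  proof (rule ccontr)
    assume "\<not> ?thesis"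
    then have "b \<noteq> 0" using True by simp
    have "0 \<le> a + 2*b*(-(a+1)/(2*b))" using assms(1)[of "-(a+1)/(2*b)"] True by simp
    also have "\<dots> = -1" using \<open>b \<noteq> 0\<close> by (simp add: field_simps)
    finally show False by simp
  qed
next
  case False
  then have c: "c > 0" using assms by simp
  have "0 \<le> a + 2*b*(-b/c) + c*(-b/c)^2" by (rule assms(1))
  also have "\<dots> = (a*c - b^2)/c" using c by (simp add: field_simps power2_eq_square)
  finally show ?thesis using c by (simp add: divide_nonneg_pos zero_le_divide_iff)
qed
lemma sym_inner:
  fixes A :: "real^'n^'n"
  assumes "transpose A = A"
  shows "x \<bullet> (A *v y) = (A *v x) \<bullet> y"
proof -
  have "x \<bullet> (A *v y) = (x v* A) \<bullet> y" by (simp add: dot_lmul_matrix)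
  also have "x v* A = transpose A *v x" by (simp add: transpose_matrix_vector)
  finally show ?thesis using assms by simp
qed

lemma q_expand:
  fixes A :: "real^'n^'n"
  shows "(x + t *\<^sub>R u) \<bullet> (A *v (x + t *\<^sub>R u)) =
     x \<bullet> (A *v x) + t * (x \<bullet> (A *v u) + u \<bullet> (A *v x)) + t^2 * (u \<bullet> (A *v u))"
  by (simp add: matrix_vector_right_distrib matrix_vector_mult_scaleR inner_add_left inner_add_right
      algebra_simps power2_eq_square)

lemma n_expand:
  fixes x u :: "real^'n"
  shows "(x + t *\<^sub>R u) \<bullet> (x + t *\<^sub>R u) = x \<bullet> x + t * (2 * (x \<bullet> u)) + t^2 * (u \<bullet> u)"
  by (simp add: inner_add_left inner_add_right inner_commute algebra_simps power2_eq_square)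

lemma rayleigh_eig:
  fixes A :: "real^'n^'n"
  assumes sym: "transpose A = A" and all: "\<forall>w. 0 \<le> s * (w \<bullet> (A *v w) - \<mu> * (w \<bullet> w))"
    and x: "x \<bullet> (A *v x) = \<mu> * (x \<bullet> x)" and s: "s \<noteq> 0"
  shows "A *v x = \<mu> *\<^sub>R x"
proof -
  define u where "u = A *v x - \<mu> *\<^sub>R x"
  have "eventually (\<lambda>t. 0 \<le> (2 * s * (x \<bullet> (A *v u) - \<mu> * (x \<bullet> u)))*t
        + (s * (u \<bullet> (A *v u) - \<mu> * (u \<bullet> u)))*t^2 + 0*t^3 + 0*t^4) (at 0)"
  proof (rule always_eventually, rule allI)
    fix t :: real
    have "0 \<le> s * ((x + t *\<^sub>R u) \<bullet> (A *v (x + t *\<^sub>R u)) - \<mu> * ((x + t *\<^sub>R u) \<bullet> (x + t *\<^sub>R u)))"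
      using all by blast
    also have "\<dots> = (2 * s * (x \<bullet> (A *v u) - \<mu> * (x \<bullet> u)))*t
        + (s * (u \<bullet> (A *v u) - \<mu> * (u \<bullet> u)))*t^2 + 0*t^3 + 0*t^4"
      unfolding q_expand n_expand using x sym_inner[OF sym, of u x]
      by (simp add: algebra_simps inner_commute)
    finally show "0 \<le> (2 * s * (x \<bullet> (A *v u) - \<mu> * (x \<bullet> u)))*t
        + (s * (u \<bullet> (A *v u) - \<mu> * (u \<bullet> u)))*t^2 + 0*t^3 + 0*t^4" .
  qed
  from poly_loc_min[OF this] s have "x \<bullet> (A *v u) - \<mu> * (x \<bullet> u) = 0" by simp
  then have "u \<bullet> u = 0" unfolding u_def using sym_inner[OF sym, of x u]
    by (simp add: inner_diff_left u_def)
  then show ?thesis unfolding u_def by simp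
qed

lemma op_bound:
  fixes A :: "real^'n^'n"
  assumes sym: "transpose A = A"
    and lo: "\<And>w. m * (w \<bullet> w) \<le> w \<bullet> (A *v w)" and hi: "\<And>w. w \<bullet> (A *v w) \<le> M * (w \<bullet> w)"
  shows "(A *v x - m *\<^sub>R x) \<bullet> (A *v x - m *\<^sub>R x) \<le> (M - m)^2 * (x \<bullet> x)"
proof -
  define b where "b = (\<lambda>x z. x \<bullet> (A *v z) - m * (x \<bullet> z))"
  define u where "u = A *v x - m *\<^sub>R x"
  have b0: "0 \<le> b w w" for w using lo[of w] by (simp add: b_def)
  have b1: "b w w \<le> (M - m) * (w \<bullet> w)" for w using hi[of w] by (simp add: b_def algebra_simps)
  have bxu: "b x u = u \<bullet> u" unfolding b_def u_def using sym_inner[OF sym, of x]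
    by (simp add: inner_diff_left inner_diff_right algebra_simps)
  have "(b x u)^2 \<le> b x x * b u u"
  proof (rule disc)
    fix t :: real
    have "0 \<le> b (x + t *\<^sub>R u) (x + t *\<^sub>R u)" by (rule b0)
    also have "\<dots> = b x x + 2 * b x u * t + b u u * t^2"
      unfolding b_def q_expand n_expand using sym_inner[OF sym, of u x]
      by (simp add: algebra_simps inner_commute)
    finally show "0 \<le> b x x + 2 * b x u * t + b u u * t^2" .
  qed (rule b0)
  also have "\<dots> \<le> ((M - m) * (x \<bullet> x)) * ((M - m) * (u \<bullet> u))"
    by (rule mult_mono[OF b1 b1]) (use b0 order_trans[OF b0 b1] in auto)
  finally have "(u \<bullet> u)^2 \<le> (M - m)^2 * (x \<bullet> x) * (u \<bullet> u)"
    using bxu by (simp add: power2_eq_square algebra_simps)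
  then show ?thesis unfolding u_def[symmetric]
    by (cases "u \<bullet> u = 0") (auto simp: power2_eq_square)
qed
lemma eig_finite:
  fixes A :: "real^'n^'n"
  assumes sym: "transpose A = A"
  shows "finite (eigenvalues_of A)"
proof -
  define E where "E = eigenvalues_of A"
  define ev where "ev = (\<lambda>c. SOME v. v \<noteq> 0 \<and> A *v v = c *\<^sub>R v)"
  have ev: "ev c \<noteq> 0 \<and> A *v ev c = c *\<^sub>R ev c" if "c \<in> E" for c
  proof -
    from that obtain v where "v \<noteq> 0 \<and> A *v v = c *\<^sub>R v" unfolding E_def eigenvalues_of_def by auto
    then show ?thesis unfolding ev_def by (rule someI)
  qed
  have inj: "inj_on ev E"
  proof (rule inj_onI)
    fix c d assume c: "c \<in> E" and d: "d \<in> E" and eq: "ev c = ev d"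
    have "c *\<^sub>R ev c = d *\<^sub>R ev c" using ev[OF c] ev[OF d] eq by metis
    then show "c = d" using ev[OF c] by (simp add: scaleR_cancel_right)
  qed
  have "pairwise orthogonal (ev ` E)"
  proof (clarsimp simp: pairwise_def)
    fix c d assume c: "c \<in> E" and d: "d \<in> E" and ne: "ev c \<noteq> ev d"
    then have cd: "c \<noteq> d" by auto
    have "c * (ev c \<bullet> ev d) = (A *v ev c) \<bullet> ev d" using ev[OF c] by simp
    also have "\<dots> = ev c \<bullet> (A *v ev d)" using sym_inner[OF sym] by simp
    also have "\<dots> = d * (ev c \<bullet> ev d)" using ev[OF d] by simp
    finally have "ev c \<bullet> ev d = 0" using cd by simp
    then show "orthogonal (ev c) (ev d)" by (simp add: orthogonal_def)
  qed
  moreover have "0 \<notin> ev ` E" using ev by auto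
  ultimately have "independent (ev ` E)" by (rule pairwise_orthogonal_independent)
  then have "finite (ev ` E)" by (rule finiteI_independent)
  then show ?thesis using finite_imageD[OF _ inj] unfolding E_def by blast
qed

lemma q_scale:
  fixes A :: "real^'n^'n"
  shows "(c *\<^sub>R z) \<bullet> (A *v (c *\<^sub>R z)) = c^2 * (z \<bullet> (A *v z))"
  by (simp add: matrix_vector_mult_scaleR power2_eq_square)

lemma sphere_scale:
  fixes w :: "real^'n"
  assumes "w \<noteq> 0"
  shows "(1 / norm w) *\<^sub>R w \<in> sphere 0 1" "w = norm w *\<^sub>R ((1 / norm w) *\<^sub>R w)"
  using assms by auto

lemma rayleigh:
  fixes A :: "real^'n^'n"
  assumes "sym_posdef A"
  shows "\<exists>m M. (\<forall>w. m * (w \<bullet> w) \<le> w \<bullet> (A *v w)) \<and> (\<forall>w. w \<bullet> (A *v w) \<le> M * (w \<bullet> w))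
     \<and> M - m \<le> lambda_max A - lambda_min A \<and> 0 < m"
proof -
  have sym: "transpose A = A" and pd: "\<And>x. x \<noteq> 0 \<Longrightarrow> x \<bullet> (A *v x) > 0"
    using assms by (auto simp: sym_posdef_def)
  have cont: "continuous_on (sphere 0 1) (\<lambda>x::real^'n. x \<bullet> (A *v x))"
    by (intro continuous_intros linear_continuous_on matrix_vector_mul_linear)
  have ne: "sphere (0::real^'n) 1 \<noteq> {}"
  proof -
    obtain i :: 'n where True by simp
    have "axis i (1::real) \<in> sphere 0 1" by simp
    then show ?thesis by blast
  qed
  obtain x where x: "x \<in> sphere 0 1" and xmin: "\<And>z. z \<in> sphere 0 1 \<Longrightarrow> x \<bullet> (A *v x) \<le> z \<bullet> (A *v z)"
    using continuous_attains_inf[OF compact_sphere ne cont] by blast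
  obtain y where y: "y \<in> sphere 0 1" and ymax: "\<And>z. z \<in> sphere 0 1 \<Longrightarrow> z \<bullet> (A *v z) \<le> y \<bullet> (A *v y)"
    using continuous_attains_sup[OF compact_sphere ne cont] by blast
  define m where "m = x \<bullet> (A *v x)"
  define M where "M = y \<bullet> (A *v y)"
  have xx: "x \<bullet> x = 1" and yy: "y \<bullet> y = 1" using x y by (auto simp: dot_square_norm)
  have lo: "m * (w \<bullet> w) \<le> w \<bullet> (A *v w)" for w
  proof (cases "w = 0")
    case False
    note s = sphere_scale[OF False]
    have "m \<le> ((1 / norm w) *\<^sub>R w) \<bullet> (A *v ((1 / norm w) *\<^sub>R w))" unfolding m_def by (rule xmin[OF s(1)])
    then have "(norm w)^2 * m \<le> (norm w)^2 * (((1 / norm w) *\<^sub>R w) \<bullet> (A *v ((1 / norm w) *\<^sub>R w)))"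
      by (rule mult_left_mono) simp_all
    also have "\<dots> = w \<bullet> (A *v w)" by (subst (3 4) s(2)) (simp only: q_scale)
    finally show ?thesis by (simp add: dot_square_norm mult.commute)
  qed simp
  have hi: "w \<bullet> (A *v w) \<le> M * (w \<bullet> w)" for w
  proof (cases "w = 0")
    case False
    note s = sphere_scale[OF False]
    have "((1 / norm w) *\<^sub>R w) \<bullet> (A *v ((1 / norm w) *\<^sub>R w)) \<le> M" unfolding M_def by (rule ymax[OF s(1)])
    then have "(norm w)^2 * (((1 / norm w) *\<^sub>R w) \<bullet> (A *v ((1 / norm w) *\<^sub>R w))) \<le> (norm w)^2 * M"
      by (rule mult_left_mono) simp_all
    moreover have "(norm w)^2 * (((1 / norm w) *\<^sub>R w) \<bullet> (A *v ((1 / norm w) *\<^sub>R w))) = w \<bullet> (A *v w)"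
      by (subst (3 4) s(2)) (simp only: q_scale)
    ultimately show ?thesis by (simp add: dot_square_norm mult.commute)
  qed simp
  have ex: "A *v x = m *\<^sub>R x"
    by (rule rayleigh_eig[OF sym, of 1]) (use lo xx m_def in auto)
  have ey: "A *v y = M *\<^sub>R y"
    by (rule rayleigh_eig[OF sym, of "-1"]) (use hi yy M_def in \<open>auto simp: algebra_simps\<close>)
  have x0: "x \<noteq> 0" and y0: "y \<noteq> 0" using xx yy by auto
  have fin: "finite (eigenvalues_of A)" by (rule eig_finite[OF sym])
  have mE: "m \<in> eigenvalues_of A" using ex x0 by (auto simp: eigenvalues_of_def)
  have ME: "M \<in> eigenvalues_of A" using ey y0 by (auto simp: eigenvalues_of_def)
  have "lambda_min A \<le> m" unfolding lambda_min_def using fin mE by simp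
  moreover have "M \<le> lambda_max A" unfolding lambda_max_def using fin ME by simp
  moreover have "0 < m" unfolding m_def using pd[OF x0] .
  ultimately show ?thesis using lo hi by (intro exI[of _ m] exI[of _ M]) auto
qed
lemma expand_id:
  fixes t qy m1 m2 qv s w S0 S1 S2 S3 S4 b fy :: real
  assumes "fy = qy/2 + b/2 * S0"
  shows "1/2 * (qy + t * (m1 + m2) + t^2 * qv) * (1 + t * (2 * s) + t^2 * w)
     + b/2 * (S0 + t * (4 * S1) + t^2 * (6 * S2) + t^3 * (4 * S3) + t^4 * S4)
     - fy * (1 + t * (2 * s) + t^2 * w)^2
   = (1/2 * (m1 + m2) + s * qy + 2 * b * S1 - 4 * s * fy) * t
     + (1/2 * (qv + 2 * s * (m1 + m2) + w * qy) + 3 * b * S2 - fy * (4 * s^2 + 2 * w)) * t^2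
     + (1/2 * (2 * s * qv + w * (m1 + m2)) + 2 * b * S3 - 4 * s * w * fy) * t^3
     + (1/2 * w * qv + b * S4 / 2 - fy * w^2) * t^4"
  using assms by (simp add: algebra_simps power2_eq_square power3_eq_cube power4_eq_xxxx)

lemma sum4_expand:
  fixes y v :: "real^'n"
  shows "(\<Sum>k\<in>UNIV. ((y + t *\<^sub>R v) $ k)^4) = (\<Sum>k\<in>UNIV. (y$k)^4)
     + t * (4 * (\<Sum>k\<in>UNIV. (y$k)^3 * v$k)) + t^2 * (6 * (\<Sum>k\<in>UNIV. (y$k)^2 * (v$k)^2))
     + t^3 * (4 * (\<Sum>k\<in>UNIV. y$k * (v$k)^3)) + t^4 * (\<Sum>k\<in>UNIV. (v$k)^4)"
proof -
  have "(\<Sum>k\<in>UNIV. ((y + t *\<^sub>R v) $ k)^4) = (\<Sum>k\<in>UNIV. (y$k)^4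
     + t * (4 * ((y$k)^3 * v$k)) + t^2 * (6 * ((y$k)^2 * (v$k)^2))
     + t^3 * (4 * (y$k * (v$k)^3)) + t^4 * (v$k)^4)"
    by (rule sum.cong) (simp_all add: algebra_simps power2_eq_square power3_eq_cube power4_eq_xxxx)
  then show ?thesis by (simp add: sum.distrib sum_distrib_left)
qed

lemma sum2:
  fixes a b :: real
  assumes "i \<noteq> j"
  shows "(\<Sum>k\<in>(UNIV::'n::finite set). (if k = i then a else if k = j then b else 0)) = a + b"
proof -
  have "(\<Sum>k\<in>(UNIV::'n set). (if k = i then a else if k = j then b else 0))
      = (\<Sum>k\<in>UNIV. (if k = i then a else 0) + (if k = j then b else 0))"
    by (rule sum.cong) (use assms in auto)
  then show ?thesis by (simp add: sum.distrib)
qed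

lemma local_poly:
  fixes A :: "real^'n^'n" and y v :: "real^'n"
  assumes lm: "local_min_on (quartic_obj A \<beta>) (sphere 0 1) y"
  shows "eventually (\<lambda>t. 0 \<le> (1/2 * ((y + t *\<^sub>R v) \<bullet> (A *v (y + t *\<^sub>R v))) * ((y + t *\<^sub>R v) \<bullet> (y + t *\<^sub>R v))
      + \<beta>/2 * (\<Sum>k\<in>UNIV. ((y + t *\<^sub>R v) $ k)^4))
      - quartic_obj A \<beta> y * ((y + t *\<^sub>R v) \<bullet> (y + t *\<^sub>R v))^2) (at 0)"
proof -
  from lm obtain e where y: "y \<in> sphere 0 1" and e: "e > 0"
    and min: "\<And>z. z \<in> sphere 0 1 \<Longrightarrow> dist z y < e \<Longrightarrow> quartic_obj A \<beta> y \<le> quartic_obj A \<beta> z"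
    unfolding local_min_on_def by blast
  have ny: "norm y = 1" using y by simp
  have lim0: "((\<lambda>t. y + t *\<^sub>R v) \<longlongrightarrow> y + (0::real) *\<^sub>R v) (at (0::real))"
    by (intro tendsto_add tendsto_scaleR tendsto_ident_at tendsto_const)
  then have lim0: "((\<lambda>t. y + t *\<^sub>R v) \<longlongrightarrow> y) (at (0::real))" by simp
  have lim1: "((\<lambda>t. norm (y + t *\<^sub>R v)) \<longlongrightarrow> 1) (at (0::real))"
    using tendsto_norm[OF lim0] ny by simp
  have lim2: "((\<lambda>t. (1 / norm (y + t *\<^sub>R v)) *\<^sub>R (y + t *\<^sub>R v)) \<longlongrightarrow> (1 / 1) *\<^sub>R y) (at (0::real))"
    by (intro tendsto_scaleR tendsto_divide lim1 lim0 tendsto_const) simp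
  then have lim2: "((\<lambda>t. (1 / norm (y + t *\<^sub>R v)) *\<^sub>R (y + t *\<^sub>R v)) \<longlongrightarrow> y) (at (0::real))" by simp
  have ev1: "eventually (\<lambda>t. norm (y + t *\<^sub>R v) > 0) (at (0::real))"
    using order_tendstoD(1)[OF lim1, of 0] by simp
  have ev2: "eventually (\<lambda>t. dist ((1 / norm (y + t *\<^sub>R v)) *\<^sub>R (y + t *\<^sub>R v)) y < e) (at (0::real))"
    using tendstoD[OF lim2 e] .
  show ?thesis using ev1 ev2
  proof eventually_elim
    case (elim t)
    define w where "w = y + t *\<^sub>R v"
    define c where "c = norm w"
    define z where "z = (1 / c) *\<^sub>R w"
    have c: "c > 0" using elim unfolding c_def w_def by simp
    have wz: "w = c *\<^sub>R z" using c unfolding z_def by simp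
    have z: "z \<in> sphere 0 1" using c unfolding z_def c_def by simp
    have zz: "z \<bullet> z = 1" using z by (simp add: dot_square_norm)
    have "quartic_obj A \<beta> y \<le> quartic_obj A \<beta> z"
      using min[OF z] elim unfolding z_def c_def w_def by simp
    then have "0 \<le> c^4 * (quartic_obj A \<beta> z - quartic_obj A \<beta> y)" using c by simp
    also have "\<dots> = (1/2 * (w \<bullet> (A *v w)) * (w \<bullet> w) + \<beta>/2 * (\<Sum>k\<in>UNIV. (w $ k)^4))
      - quartic_obj A \<beta> y * (w \<bullet> w)^2"
    proof -
      have ww: "w \<bullet> w = c^2" unfolding wz using zz by (simp add: power2_eq_square)
      have s4: "(\<Sum>k\<in>UNIV. (w $ k)^4) = c^4 * (\<Sum>k\<in>UNIV. (z $ k)^4)"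
        unfolding wz by (simp add: sum_distrib_left power_mult_distrib)
      show ?thesis unfolding ww s4 unfolding wz q_scale quartic_obj_def
        by (simp add: algebra_simps power2_eq_square power4_eq_xxxx)
    qed
    finally show ?case unfolding w_def .
  qed
qed
lemma local_coeffs:
  fixes A :: "real^'n^'n" and y v :: "real^'n"
  assumes lm: "local_min_on (quartic_obj A \<beta>) (sphere 0 1) y"
  defines "fy \<equiv> quartic_obj A \<beta> y"
  shows "1/2 * (y \<bullet> (A *v v) + v \<bullet> (A *v y)) + (y \<bullet> v) * (y \<bullet> (A *v y))
           + 2 * \<beta> * (\<Sum>k\<in>UNIV. (y$k)^3 * v$k) - 4 * (y \<bullet> v) * fy = 0"
    and "0 \<le> 1/2 * (v \<bullet> (A *v v) + 2 * (y \<bullet> v) * (y \<bullet> (A *v v) + v \<bullet> (A *v y)) + (v \<bullet> v) * (y \<bullet> (A *v y)))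
           + 3 * \<beta> * (\<Sum>k\<in>UNIV. (y$k)^2 * (v$k)^2) - fy * (4 * (y \<bullet> v)^2 + 2 * (v \<bullet> v))"
proof -
  have yy: "y \<bullet> y = 1" using lm by (auto simp: local_min_on_def dot_square_norm)
  have fy: "fy = (y \<bullet> (A *v y))/2 + \<beta>/2 * (\<Sum>k\<in>UNIV. (y$k)^4)"
    unfolding fy_def quartic_obj_def by simp
  have "eventually (\<lambda>t. 0 \<le> (1/2 * ((y + t *\<^sub>R v) \<bullet> (A *v (y + t *\<^sub>R v))) * ((y + t *\<^sub>R v) \<bullet> (y + t *\<^sub>R v))
      + \<beta>/2 * (\<Sum>k\<in>UNIV. ((y + t *\<^sub>R v) $ k)^4))
      - fy * ((y + t *\<^sub>R v) \<bullet> (y + t *\<^sub>R v))^2) (at 0)"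
    using local_poly[OF lm, of v] unfolding fy_def .
  then have "eventually (\<lambda>t. 0 \<le> 
     (1/2 * (y \<bullet> (A *v v) + v \<bullet> (A *v y)) + (y \<bullet> v) * (y \<bullet> (A *v y)) + 2 * \<beta> * (\<Sum>k\<in>UNIV. (y$k)^3 * v$k) - 4 * (y \<bullet> v) * fy) * t
     + (1/2 * (v \<bullet> (A *v v) + 2 * (y \<bullet> v) * (y \<bullet> (A *v v) + v \<bullet> (A *v y)) + (v \<bullet> v) * (y \<bullet> (A *v y))) + 3 * \<beta> * (\<Sum>k\<in>UNIV. (y$k)^2 * (v$k)^2) - fy * (4 * (y \<bullet> v)^2 + 2 * (v \<bullet> v))) * t^2
     + (1/2 * (2 * (y \<bullet> v) * (v \<bullet> (A *v v)) + (v \<bullet> v) * (y \<bullet> (A *v v) + v \<bullet> (A *v y))) + 2 * \<beta> * (\<Sum>k\<in>UNIV. y$k * (v$k)^3) - 4 * (y \<bullet> v) * (v \<bullet> v) * fy) * t^3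
     + (1/2 * (v \<bullet> v) * (v \<bullet> (A *v v)) + \<beta> * (\<Sum>k\<in>UNIV. (v$k)^4) / 2 - fy * (v \<bullet> v)^2) * t^4) (at 0)"
    unfolding q_expand n_expand sum4_expand yy
    by (simp only: expand_id[OF fy])
  from poly_loc_min[OF this]
  show "1/2 * (y \<bullet> (A *v v) + v \<bullet> (A *v y)) + (y \<bullet> v) * (y \<bullet> (A *v y))
           + 2 * \<beta> * (\<Sum>k\<in>UNIV. (y$k)^3 * v$k) - 4 * (y \<bullet> v) * fy = 0"
    and "0 \<le> 1/2 * (v \<bullet> (A *v v) + 2 * (y \<bullet> v) * (y \<bullet> (A *v v) + v \<bullet> (A *v y)) + (v \<bullet> v) * (y \<bullet> (A *v y)))
           + 3 * \<beta> * (\<Sum>k\<in>UNIV. (y$k)^2 * (v$k)^2) - fy * (4 * (y \<bullet> v)^2 + 2 * (v \<bullet> v))"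
    by auto
qed
lemma final_arith:
  fixes n b r D :: real
  assumes n: "n \<ge> 2" and b: "b > 0" and r: "r \<ge> 0" and key: "18 * n^3 * r \<le> b * (n - 1)"
    and DD: "(2*b/n - r) / (12*b) * (4 * b^2) * D \<le> r^2" and D: "D \<ge> 0"
  shows "r/2 + b/2 * D \<le> b / (36 * n^2)"
proof -
  have n0: "n > 0" using n by simp
  have "18 * n^3 * r \<le> b * n" using key b by (smt (verit) mult_left_mono)
  then have r1: "r \<le> b / (18 * n^2)" using n0 by (simp add: field_simps power2_eq_square power3_eq_cube)
  have "b / (18 * n^2) \<le> b / (2 * n)" using n0 b n
    by (intro divide_left_mono) (auto simp: power2_eq_square)
  then have r2: "r \<le> b / (2*n)" using r1 by simp
  have "(2*b/n - r) / (12*b) * (4 * b^2) = (2*b/n - r) * b / 3" using b by (simp add: field_simps power2_eq_square)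
  also have "\<dots> \<ge> (3/2 * b / n) * b / 3"
    using r2 b n0 by (intro divide_right_mono mult_right_mono) (auto simp: field_simps)
  finally have "(3/2 * b / n) * b / 3 * D \<le> r^2" using DD D by (meson mult_right_mono order_trans)
  then have D1: "D \<le> 2 * n * r^2 / b^2" using b n0 by (simp add: field_simps power2_eq_square)
  have "b/2 * D \<le> b/2 * (2 * n * r^2 / b^2)" using D1 b by (intro mult_left_mono) auto
  also have "\<dots> = n * r * (r / b)" using b by (simp add: field_simps power2_eq_square)
  also have "\<dots> \<le> n * (b / (18 * n^2)) * (1 / (18 * n^2))"
    using r1 r b n0 by (intro mult_mono) (auto simp: field_simps)
  also have "\<dots> = b / (324 * n^3)" using n0 by (simp add: field_simps power2_eq_square power3_eq_cube)
  finally have t1: "b/2 * D \<le> b / (324 * n^3)" .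
  have t2: "r/2 \<le> b * (n - 1) / (36 * n^3)" using key n0 by (simp add: field_simps)
  have "b / (324 * n^3) \<le> b / (36 * n^3)" using b n0 by (intro divide_left_mono) auto
  then have "r/2 + b/2 * D \<le> b * (n - 1) / (36 * n^3) + b / (36 * n^3)" using t1 t2 by simp
  also have "\<dots> = b / (36 * n^2)" using n0 by (simp add: field_simps power2_eq_square power3_eq_cube)
  finally show ?thesis .
qed
lemma sumsq1:
  fixes z :: "real^'n"
  assumes "z \<bullet> z = 1"
  shows "(\<Sum>k\<in>UNIV. (z$k)^2) = 1"
  using assms by (simp add: inner_vec_def power2_eq_square)

lemma sq_sum_id:
  fixes z :: "real^'n"
  assumes "z \<bullet> z = 1"
  shows "(\<Sum>k\<in>UNIV. ((z$k)^2 - c)^2) = (\<Sum>k\<in>UNIV. (z$k)^4) - 2*c + real CARD('n) * c^2"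
proof -
  have "(\<Sum>k\<in>UNIV. ((z$k)^2 - c)^2) = (\<Sum>k\<in>UNIV. (z$k)^4 - 2*c*(z$k)^2 + c^2)"
    by (rule sum.cong) (simp_all add: algebra_simps power2_eq_square power4_eq_xxxx)
  also have "\<dots> = (\<Sum>k\<in>UNIV. (z$k)^4) - 2*c*(\<Sum>k\<in>UNIV. (z$k)^2) + real CARD('n) * c^2"
    by (simp add: sum.distrib sum_subtractf sum_distrib_left)
  finally show ?thesis using sumsq1[OF assms] by simp
qed

lemma quart_lb:
  fixes z :: "real^'n"
  assumes "z \<bullet> z = 1"
  shows "1 / real CARD('n) \<le> (\<Sum>k\<in>UNIV. (z$k)^4)"
proof -
  have "0 \<le> (\<Sum>k\<in>UNIV. ((z$k)^2 - 1 / real CARD('n))^2)" by (simp add: sum_nonneg)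
  also have "\<dots> = (\<Sum>k\<in>UNIV. (z$k)^4) - 1 / real CARD('n)"
    unfolding sq_sum_id[OF assms] by (simp add: field_simps power2_eq_square)
  finally show ?thesis by simp
qed
theorem theorem13:
  fixes A :: "real^'n^'n" and \<beta> :: real and y :: "real^'n"
  assumes "CARD('n) \<ge> 2"
    and "sym_posdef A"
    and "\<beta> > 18 * real (CARD('n)) ^ 3 / (real (CARD('n)) - 1) * (lambda_max A - lambda_min A)"
    and "local_min_on (quartic_obj A \<beta>) (sphere 0 1) y"
  shows "quartic_obj A \<beta> y - (INF z\<in>sphere 0 1. quartic_obj A \<beta> z)
           \<le> 1 / (18 * real (CARD('n))) * (INF z\<in>sphere 0 1. quartic_obj A \<beta> z)"
proof -
  have sym: "transpose A = A" using assms(2) by (simp add: sym_posdef_def)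
  obtain m0 M where lo: "\<And>w. m0 * (w \<bullet> w) \<le> w \<bullet> (A *v w)" and hi: "\<And>w. w \<bullet> (A *v w) \<le> M * (w \<bullet> w)"
    and MR: "M - m0 \<le> lambda_max A - lambda_min A" and m0: "0 < m0"
    using rayleigh[OF assms(2)] by blast
  define n where "n = real CARD('n)"
  have n2: "n \<ge> 2" using assms(1) unfolding n_def by simp
  have n0: "n > 0" using n2 by simp
  have y: "y \<in> sphere 0 1" using assms(4) by (simp add: local_min_on_def)
  have yy: "y \<bullet> y = 1" using y by (simp add: dot_square_norm)
  define qy where "qy = y \<bullet> (A *v y)"
  define S0 where "S0 = (\<Sum>k\<in>UNIV. (y$k)^4)"
  define fy where "fy = quartic_obj A \<beta> y"
  define lam where "lam = qy + 2 * \<beta> * S0"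
  define r where "r = M - m0"
  have fy_eq: "fy = qy/2 + \<beta>/2 * S0" unfolding fy_def quartic_obj_def qy_def S0_def by simp
  have qlo: "m0 \<le> qy" using lo[of y] yy unfolding qy_def by simp
  have qhi: "qy \<le> M" using hi[of y] yy unfolding qy_def by simp
  have r0: "r \<ge> 0" using qlo qhi unfolding r_def by simp
  have bkey: "\<beta> > 0 \<and> 18 * n^3 * r \<le> \<beta> * (n - 1)"
  proof -
    define X where "X = 18 * n^3 / (n - 1)"
    have X0: "X \<ge> 0" using n2 unfolding X_def by simp
    have b: "\<beta> > X * (lambda_max A - lambda_min A)" using assms(3) unfolding X_def n_def by simp
    have "X * r \<le> X * (lambda_max A - lambda_min A)" using MR X0 unfolding r_def by (simp add: mult_left_mono)
    then have bx: "\<beta> > X * r" using b by simp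
    then have "\<beta> > 0" using X0 r0 by (smt (verit) mult_nonneg_nonneg)
    moreover have e: "X * r * (n - 1) = 18 * n^3 * r" using n2 unfolding X_def by (simp add: field_simps)
    moreover have "X * r * (n - 1) \<le> \<beta> * (n - 1)" using bx n2 by (intro mult_right_mono) auto
    ultimately show ?thesis by (simp only: e)
  qed
  have b0: "\<beta> > 0" using bkey by simp
  have FO: "(A *v y) $ k + 2 * \<beta> * (y$k)^3 = lam * y$k" for k
  proof -
    have "(\<Sum>j\<in>UNIV. (y$j)^3 * axis k 1 $ j) = (\<Sum>j\<in>UNIV. if j = k then (y$k)^3 else 0)"
      by (rule sum.cong) (auto simp: axis_def)
    then have "(\<Sum>j\<in>UNIV. (y$j)^3 * axis k 1 $ j) = (y$k)^3" by simp
    moreover have "y \<bullet> (A *v axis k 1) = (A *v y) $ k" using sym_inner[OF sym, of y] by (simp add: inner_axis)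
    ultimately show ?thesis using local_coeffs(1)[OF assms(4), of "axis k 1"] unfolding lam_def fy_def[symmetric] fy_eq qy_def S0_def
      by (simp add: inner_axis inner_axis' algebra_simps)
  qed
  have SO: "lam * ((y$i)^2 + (y$j)^2) \<le> M * ((y$i)^2 + (y$j)^2) + 12 * \<beta> * (y$i)^2 * (y$j)^2" if ij: "i \<noteq> j" for i j
  proof -
    define v :: "real^'n" where "v = (\<chi> k. if k = i then y$j else if k = j then -(y$i) else 0)"
    have yv: "y \<bullet> v = 0"
    proof -
      have "y \<bullet> v = (\<Sum>k\<in>UNIV. if k = i then y$i * y$j else if k = j then -(y$j * y$i) else 0)"
        unfolding inner_vec_def by (rule sum.cong) (auto simp: v_def)
      then show ?thesis using sum2[OF ij] by simp
    qed
    have vv: "v \<bullet> v = (y$i)^2 + (y$j)^2"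
    proof -
      have "v \<bullet> v = (\<Sum>k\<in>UNIV. if k = i then (y$j)^2 else if k = j then (y$i)^2 else 0)"
        unfolding inner_vec_def by (rule sum.cong) (auto simp: v_def power2_eq_square)
      then show ?thesis using sum2[OF ij] by simp
    qed
    have S2: "(\<Sum>k\<in>UNIV. (y$k)^2 * (v$k)^2) = 2 * ((y$i)^2 * (y$j)^2)"
    proof -
      have "(\<Sum>k\<in>UNIV. (y$k)^2 * (v$k)^2) = (\<Sum>k\<in>UNIV. if k = i then (y$i)^2 * (y$j)^2 else if k = j then (y$i)^2 * (y$j)^2 else 0)"
        by (rule sum.cong) (auto simp: v_def power2_eq_square)
      then show ?thesis using sum2[OF ij] by simp
    qed
    have c2: "0 \<le> 1/2 * (v \<bullet> (A *v v) + (v \<bullet> v) * qy) + 3 * \<beta> * (2 * ((y$i)^2 * (y$j)^2)) - fy * (2 * (v \<bullet> v))"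
      using local_coeffs(2)[OF assms(4), of v] unfolding fy_def[symmetric] yv S2 qy_def by simp
    have "v \<bullet> (A *v v) \<le> M * (v \<bullet> v)" by (rule hi)
    then show ?thesis using c2 unfolding vv lam_def fy_eq by (simp add: algebra_simps)
  qed
  define a where "a = (\<lambda>k. (y$k)^2)"
  have a0: "a k \<ge> 0" for k unfolding a_def by simp
  have suma: "(\<Sum>k\<in>UNIV. a k) = 1" unfolding a_def by (rule sumsq1[OF yy])
  have S0lb: "1 / n \<le> S0" unfolding S0_def n_def by (rule quart_lb[OF yy])
  obtain j where aj: "a j \<ge> 1 / n"
  proof (rule ccontr)
    assume "\<not> thesis"
    then have "\<forall>k. a k < 1 / n" using that by (metis not_le)
    then have "(\<Sum>k\<in>UNIV. a k) < (\<Sum>k\<in>(UNIV::'n set). 1 / n)"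
      by (intro sum_strict_mono) auto
    also have "\<dots> = 1" using n0 unfolding n_def by simp
    finally show False using suma by simp
  qed
  define K where "K = 2 * \<beta> / n - r"
  have rK: "r \<le> \<beta> / (2 * n)"
  proof -
    have "18 * n^3 * r \<le> \<beta> * n" using bkey b0 by (smt (verit) mult_left_mono)
    then have r1: "r \<le> \<beta> / (18 * n^2)" using n0 by (simp add: field_simps power2_eq_square power3_eq_cube)
    have "\<beta> / (18 * n^2) \<le> \<beta> / (2 * n)" using n0 b0 n2
      by (intro divide_left_mono) (auto simp: power2_eq_square)
    then show ?thesis using r1 by simp
  qed
  have K0: "K > 0" using rK b0 n0 unfolding K_def by (simp add: field_simps)
  have lamK: "K \<le> lam - M"
  proof -
    have "2 * \<beta> * (1 / n) \<le> 2 * \<beta> * S0" using S0lb b0 by (intro mult_left_mono) auto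
    then have "2 * \<beta> / n \<le> 2 * \<beta> * S0" by simp
    then show ?thesis unfolding K_def lam_def r_def using qlo by simp
  qed
  have lowb: "K \<le> 12 * \<beta> * a i" for i
  proof (cases "i = j")
    case True
    have "K \<le> 2 * \<beta> / n" unfolding K_def using r0 by simp
    also have "\<dots> \<le> 12 * \<beta> * (1 / n)" using b0 n0 by (simp add: field_simps)
    also have "\<dots> \<le> 12 * \<beta> * a i" using True aj b0 by (intro mult_left_mono) auto
    finally show ?thesis .
  next
    case False
    have ajp: "a j > 0" using aj n0 by (smt (verit) divide_pos_pos)
    have "K * a j \<le> K * (a i + a j)" using K0 a0 by simp
    also have "\<dots> \<le> (lam - M) * (a i + a j)" using lamK a0 by (intro mult_right_mono) auto
    also have "\<dots> \<le> 12 * \<beta> * a i * a j" using SO[OF False] unfolding a_def by (simp add: algebra_simps)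
    finally show ?thesis using ajp by simp
  qed
  define lam' where "lam' = lam - m0"
  have uu: "(\<Sum>k\<in>UNIV. a k * (lam' - 2 * \<beta> * a k)^2) \<le> r^2"
  proof -
    have "(A *v y - m0 *\<^sub>R y) \<bullet> (A *v y - m0 *\<^sub>R y) \<le> (M - m0)^2 * (y \<bullet> y)"
      by (rule op_bound[OF sym lo hi])
    moreover have "(A *v y - m0 *\<^sub>R y) \<bullet> (A *v y - m0 *\<^sub>R y) = (\<Sum>k\<in>UNIV. a k * (lam' - 2 * \<beta> * a k)^2)"
      unfolding inner_vec_def
    proof (rule sum.cong)
      fix k
      have "(A *v y) $ k = lam * y$k - 2 * \<beta> * (y$k)^3" using FO[of k] by simp
      then have "(A *v y - m0 *\<^sub>R y) $ k = y$k * (lam' - 2 * \<beta> * a k)"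
        unfolding a_def lam'_def by (simp add: algebra_simps power2_eq_square power3_eq_cube)
      then show "(A *v y - m0 *\<^sub>R y) $ k \<bullet> (A *v y - m0 *\<^sub>R y) $ k = a k * (lam' - 2 * \<beta> * a k)^2"
        unfolding a_def by (simp add: power2_eq_square)
    qed simp
    ultimately show ?thesis using yy unfolding r_def by simp
  qed
  define mlow where "mlow = K / (12 * \<beta>)"
  have mlow: "mlow \<le> a k" for k using lowb[of k] b0 unfolding mlow_def by (simp add: field_simps)
  have mlow0: "mlow \<ge> 0" using K0 b0 unfolding mlow_def by simp
  define c where "c = lam' / (2 * \<beta>)"
  define D where "D = S0 - 1 / n"
  have D0: "D \<ge> 0" using S0lb unfolding D_def by simp
  have sumc: "(\<Sum>k\<in>UNIV. (lam' - 2 * \<beta> * a k)^2) = 4 * \<beta>^2 * (\<Sum>k\<in>UNIV. (a k - c)^2)"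
  proof -
    have "(\<Sum>k\<in>UNIV. (lam' - 2 * \<beta> * a k)^2) = (\<Sum>k\<in>UNIV. 4 * \<beta>^2 * (a k - c)^2)"
      by (rule sum.cong) (use b0 in \<open>simp_all add: c_def field_simps power2_eq_square\<close>)
    then show ?thesis by (simp add: sum_distrib_left)
  qed
  have Dc: "D \<le> (\<Sum>k\<in>UNIV. (a k - c)^2)"
  proof -
    have "(\<Sum>k\<in>UNIV. (a k - c)^2) = S0 - 2*c + n * c^2"
      unfolding a_def S0_def n_def by (rule sq_sum_id[OF yy])
    moreover have "S0 - 2*c + n * c^2 - D = n * (c - 1/n)^2"
      unfolding D_def using n0 by (simp add: field_simps power2_eq_square)
    moreover have "n * (c - 1/n)^2 \<ge> 0" using n0 by simp
    ultimately show ?thesis by linarith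
  qed
  have "(4 * \<beta>^2) * D \<le> (4 * \<beta>^2) * (\<Sum>k\<in>UNIV. (a k - c)^2)"
    using Dc by (intro mult_left_mono) auto
  then have "(4 * \<beta>^2) * D \<le> (\<Sum>k\<in>UNIV. (lam' - 2 * \<beta> * a k)^2)" unfolding sumc .
  then have "mlow * ((4 * \<beta>^2) * D) \<le> mlow * (\<Sum>k\<in>UNIV. (lam' - 2 * \<beta> * a k)^2)"
    using mlow0 by (intro mult_left_mono) auto
  then have "mlow * (4 * \<beta>^2) * D \<le> mlow * (\<Sum>k\<in>UNIV. (lam' - 2 * \<beta> * a k)^2)"
    by (simp add: mult.assoc)
  also have "\<dots> = (\<Sum>k\<in>UNIV. mlow * (lam' - 2 * \<beta> * a k)^2)" by (simp add: sum_distrib_left)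
  also have "\<dots> \<le> (\<Sum>k\<in>UNIV. a k * (lam' - 2 * \<beta> * a k)^2)"
    by (intro sum_mono mult_right_mono mlow) simp
  also have "\<dots> \<le> r^2" by (rule uu)
  finally have DD: "(2*\<beta>/n - r) / (12*\<beta>) * (4 * \<beta>^2) * D \<le> r^2" unfolding mlow_def K_def .
  have fin: "r/2 + \<beta>/2 * D \<le> \<beta> / (36 * n^2)"
    by (rule final_arith[OF n2 b0 r0 _ DD D0]) (use bkey in simp)
  define L where "L = m0/2 + \<beta> / (2 * n)"
  have Lb: "L \<le> (INF z\<in>sphere 0 1. quartic_obj A \<beta> z)"
  proof (rule cINF_greatest)
    show "sphere (0::real^'n) 1 \<noteq> {}" using y by blast
  next
    fix z :: "real^'n" assume "z \<in> sphere 0 1"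
    then have zz: "z \<bullet> z = 1" by (simp add: dot_square_norm)
    have "m0 \<le> z \<bullet> (A *v z)" using lo[of z] zz by simp
    moreover have "1 / n \<le> (\<Sum>k\<in>UNIV. (z$k)^4)" unfolding n_def by (rule quart_lb[OF zz])
    then have "\<beta> * (1 / n) \<le> \<beta> * (\<Sum>k\<in>UNIV. (z$k)^4)" using b0 by (intro mult_left_mono) auto
    ultimately have "m0 / 2 + (\<beta> * (1 / n)) / 2 \<le> (z \<bullet> (A *v z)) / 2 + (\<beta> * (\<Sum>k\<in>UNIV. (z$k)^4)) / 2"
      by (intro add_mono divide_right_mono) auto
    then show "L \<le> quartic_obj A \<beta> z" unfolding L_def quartic_obj_def
      by simp
  qed
  have fyb: "fy \<le> L + \<beta> / (36 * n^2)"
  proof -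
    have "fy = qy/2 + \<beta>/2 * (D + 1/n)" unfolding fy_eq D_def by simp
    also have "\<dots> \<le> m0/2 + r/2 + \<beta>/2 * D + \<beta>/(2*n)" using qhi unfolding r_def by (simp add: field_simps)
    finally show ?thesis using fin unfolding L_def by simp
  qed
  have "L + \<beta> / (36 * n^2) \<le> (1 + 1 / (18 * n)) * L"
    unfolding L_def using m0 n0 b0 by (simp add: field_simps power2_eq_square)
  also have "\<dots> \<le> (1 + 1 / (18 * n)) * (INF z\<in>sphere 0 1. quartic_obj A \<beta> z)"
    using Lb n0 by (intro mult_left_mono) auto
  finally show ?thesis using fyb unfolding fy_def n_def by (simp add: algebra_simps)
qed
end
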